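(* Let $S$ and $T$ be linear relations between two vector spaces $\mathcal{H}$ and $\mathcal{K}$ (i.e. linear subspaces of $\mathcal{H}\times\mathcal{K}$). Then the following three statements are equivalent: (i) $S\subset T$; (ii) $\ker S\subset \ker T$ and $\operatorname{ran} S\subset \operatorname{ran}(S\cap T)$; (iii) $\operatorname{ran} S\subset \operatorname{ran} T$ and $\ker(S\vee T)\subset \ker T$.
   Context: For a linear relation $R\subset \mathcal{H}\times\mathcal{K}$: $\operatorname{ran} R=\{k:(h,k)\in R \text{ for some } h\}$ and $\ker R=\{h:(h,0)\in R\}$. $S\cap T$ is the set-theoretic intersection of the subspaces $S,T$ (again a linear relation), and $S\vee T$ denotes the linear span of $S\cup T$ in $\mathcal{H}\times\mathcal{K}$. *)

theory Defs
  imports Complex_Main "HOL-Library.Product_Plus"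
begin

definition prod_scale ::
  "('f \<Rightarrow> 'a \<Rightarrow> 'a) \<Rightarrow> ('f \<Rightarrow> 'b \<Rightarrow> 'b) \<Rightarrow> 'f \<Rightarrow> 'a \<times> 'b \<Rightarrow> 'a \<times> 'b" where
  "prod_scale sH sK c p = (sH c (fst p), sK c (snd p))"

definition linear_relation ::
  "('f::field \<Rightarrow> 'a::ab_group_add \<Rightarrow> 'a) \<Rightarrow> ('f \<Rightarrow> 'b::ab_group_add \<Rightarrow> 'b) \<Rightarrow> ('a \<times> 'b) set \<Rightarrow> bool" where
  "linear_relation sH sK R = module.subspace (prod_scale sH sK) R"

definition ran_rel :: "('a \<times> 'b) set \<Rightarrow> 'b set" where
  "ran_rel R = {k. \<exists>h. (h, k) \<in> R}"

definition ker_rel :: "('a \<times> 'b::zero) set \<Rightarrow> 'a set" where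
  "ker_rel R = {h. (h, 0) \<in> R}"

definition sup_rel ::
  "('f::field \<Rightarrow> 'a::ab_group_add \<Rightarrow> 'a) \<Rightarrow> ('f \<Rightarrow> 'b::ab_group_add \<Rightarrow> 'b)
    \<Rightarrow> ('a \<times> 'b) set \<Rightarrow> ('a \<times> 'b) set \<Rightarrow> ('a \<times> 'b) set" where
  "sup_rel sH sK S T = module.span (prod_scale sH sK) (S \<union> T)"

end

theory Submission
  imports Defs
begin

lemma prod_module:
  assumes "vector_space sH" and "vector_space sK"
  shows "module (prod_scale sH sK)"
proof -
  interpret H: vector_space sH by fact
  interpret K: vector_space sK by fact
  show ?thesis
    by unfold_locales
      (auto simp: prod_scale_def H.scale_right_distrib K.scale_right_distrib
         H.scale_left_distrib K.scale_left_distrib)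
qed

theorem proposition3p1:
  fixes sH :: "'f::field \<Rightarrow> 'a::ab_group_add \<Rightarrow> 'a"
    and sK :: "'f \<Rightarrow> 'b::ab_group_add \<Rightarrow> 'b"
    and S T :: "('a \<times> 'b) set"
  assumes "vector_space sH" and "vector_space sK"
    and "linear_relation sH sK S" and "linear_relation sH sK T"
  shows "(S \<subseteq> T \<longleftrightarrow> ker_rel S \<subseteq> ker_rel T \<and> ran_rel S \<subseteq> ran_rel (S \<inter> T))
       \<and> (S \<subseteq> T \<longleftrightarrow> ran_rel S \<subseteq> ran_rel T \<and> ker_rel (sup_rel sH sK S T) \<subseteq> ker_rel T)"
proof -
  interpret P: module "prod_scale sH sK" using prod_module[OF assms(1,2)] .
  have sS: "P.subspace S" and sT: "P.subspace T"
    using assms(3,4) by (auto simp: linear_relation_def)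
  have A: "S \<subseteq> T" if a1: "ker_rel S \<subseteq> ker_rel T" and a2: "ran_rel S \<subseteq> ran_rel (S \<inter> T)"
  proof
    fix p assume p: "p \<in> S"
    obtain h k where hk: "p = (h, k)" by (cases p)
    then have "k \<in> ran_rel S" using p by (auto simp: ran_rel_def)
    then obtain h' where h': "(h', k) \<in> S" "(h', k) \<in> T"
      using a2 by (auto simp: ran_rel_def)
    have "(h, k) - (h', k) \<in> S" using P.subspace_diff[OF sS] p hk h' by (metis diff_self)
    then have "(h - h', 0) \<in> S" by simp
    then have "h - h' \<in> ker_rel T" using a1 by (auto simp: ker_rel_def)
    then have "(h - h', 0) \<in> T" by (simp add: ker_rel_def)
    then have "(h - h' + h', 0 + k) \<in> T" using P.subspace_add[OF sT] h' by (metis add_Pair)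
    then show "p \<in> T" using hk by simp
  qed
  have B: "S \<subseteq> T" if b1: "ran_rel S \<subseteq> ran_rel T" and b2: "ker_rel (sup_rel sH sK S T) \<subseteq> ker_rel T"
  proof
    fix p assume p: "p \<in> S"
    obtain h k where hk: "p = (h, k)" by (cases p)
    then have "k \<in> ran_rel S" using p by (auto simp: ran_rel_def)
    then obtain h' where h': "(h', k) \<in> T"
      using b1 by (auto simp: ran_rel_def)
    have "(h, k) - (h', k) \<in> sup_rel sH sK S T"
      unfolding sup_rel_def using p hk h'
      by (intro P.span_diff P.span_base) auto
    then have "(h - h', 0) \<in> sup_rel sH sK S T" by simp
    then have "h - h' \<in> ker_rel T" using b2 by (auto simp: ker_rel_def)
    then have "(h - h', 0) \<in> T" by (simp add: ker_rel_def)
    then have "(h - h' + h', 0 + k) \<in> T" using P.subspace_add[OF sT] h' by (metis add_Pair)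
    then show "p \<in> T" using hk by simp
  qed
  have C: "ker_rel S \<subseteq> ker_rel T \<and> ran_rel S \<subseteq> ran_rel (S \<inter> T)" if "S \<subseteq> T"
    using that by (auto simp: ker_rel_def ran_rel_def)
  have D: "ran_rel S \<subseteq> ran_rel T \<and> ker_rel (sup_rel sH sK S T) \<subseteq> ker_rel T" if "S \<subseteq> T"
  proof -
    have "sup_rel sH sK S T = T"
      unfolding sup_rel_def using that sT
      by (metis P.span_eq_iff Un_absorb1)
    then show ?thesis using that by (auto simp: ker_rel_def ran_rel_def)
  qed
  show ?thesis using A B C D by blast
qed

end
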